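(* Let $\mathcal{JF}=(\mathcal F,\mathcal F_d,R)$ be a complementary justification frame and $x\in\mathcal F_d$. If $\tau$ is a positional strategy for player $F$ in $G_{\mathcal{JF}}$, then $J_\tau(x)$ (the play graph of $\tau$ in $x$ with rule symbols filtered out and every label $y$ replaced by $\sim y$) is a connected, locally complete graph-like justification in $\mathcal{JF}$ with $\sim x$ as a root. If $\tau$ is a general strategy for $F$, then $J_\tau(x)$ (obtained in the same way from the play tree of $\tau$ in $x$) is a connected, locally complete tree-like justification in $\mathcal{JF}$ with $\sim x$ as a root.
   Context: Let $\mathcal F$ be a set (fact space) containing $\mathcal L=\{\mathbf t,\mathbf f,\mathbf u\}$ with an involution $\sim$ satisfying $\sim\mathbf t=\mathbf f$, $\sim\mathbf u=\mathbf u$, $\sim x\ne x$ for $x\ne\mathbf u$; $\sim A=\{\sim a:a\in A\}$. A justification frame is $\mathcal{JF}=(\mathcal F,\mathcal F_d,R)$ where $\mathcal F_d\subseteq\mathcal F$ satisfies $\sim\mathcal F_d=\mathcal F_d$, $\mathcal F_d\cap\mathcal L=\emptyset$, and $R\subseteq\mathcal F_d\times2^{\mathcal F}$ is a set of rules $x\gets A$ with nonempty bodies such that every $x\in\mathcal F_d$ heads a rule; $\mathcal F_o=\mathcal F\setminus\mathcal F_d$. A selection function for $x\in\mathcal F_d$ assigns to every body $A$ of a rule $x\gets A$ an element $s(A)\in A$; $\mathrm{Im}(s)$ is its image. $R^*$ is the set of all rules $\sim x\gets\sim\mathrm{Im}(s)$ with $x\in\mathcal F_d$ and $s$ a selection function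 for $x$. The frame is complementary if $R^*=R$. A justification in $\mathcal{JF}$ is a directed graph $(N,E)$ with labelling $\ell:N\to\mathcal F$ such that each internal node $n$ (node with an outgoing edge) has $\ell(n)\in\mathcal F_d$ and $\ell(n)\gets\{\ell(m):(n,m)\in E\}\in R$; graph-like if $\ell$ is injective; tree-like if its underlying undirected graph is acyclic; locally complete if no leaf is labelled by a defined fact; connected if its underlying undirected graph is connected; $y$ is a root if some node labelled $y$ reaches every node. Game graph $G_{\mathcal{JF}}$: states $S_T=\mathcal F$ (owned by $T$) and $S_F=\{r_{x\gets A}:x\gets A\in R\}$ (owned by $F$), edges $(x,r_{x\gets A})$ and $(r_{x\gets A},y)$ for every rule $x\gets A$, $y\in A$. A general strategy for $P\in\{T,F\}$ maps each finite path whose last state $s\in S_P$ has an outgoing edge to an outgoing edge of $s$; a positional strategy depends only on the last state. A path $s_0s_1\cdots$ is consistent with a strategy $\rho$ of $P$ if $\rho(s_0\cdots s_i)=(s_i,s_{i+1})$ whenever $s_i\in S_P$ and $s_{i+1}$ exists. The play tree of a general strategy $\rho$ in $x$ has as nodes the finite paths from $x$ consistent with $\rho$, labelled by their last state, with edges to one-step extensions; the play graph of a positional $\rho$ in $x$ is the subgraph of $G_{\mathcal{JF}}$ of states and edges on paths from $x$ consistent with $\rho$. Filtering out rule symbols: delete rule-symbol nodes and add an edge $(n,m)$ whenever $(n,k),(k,m)$ were edges with $k$ a rule-symbol node. *)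

theory Defs
  imports Main
begin

text \<open>The fact space is the universe of the type 'f. The involution is neg,
  the logical facts are tt, ff, uu.\<close>

definition fact_space_ok :: "('f \<Rightarrow> 'f) \<Rightarrow> 'f \<Rightarrow> 'f \<Rightarrow> 'f \<Rightarrow> bool" where
  "fact_space_ok neg tt ff uu \<longleftrightarrow>
     distinct [tt, ff, uu] \<and> (\<forall>x. neg (neg x) = x) \<and>
     neg tt = ff \<and> neg uu = uu \<and> (\<forall>x. x \<noteq> uu \<longrightarrow> neg x \<noteq> x)"

definition justification_frame ::
  "('f \<Rightarrow> 'f) \<Rightarrow> 'f \<Rightarrow> 'f \<Rightarrow> 'f \<Rightarrow> 'f set \<Rightarrow> ('f \<times> 'f set) set \<Rightarrow> bool" where
  "justification_frame neg tt ff uu Fd R \<longleftrightarrow>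
     fact_space_ok neg tt ff uu \<and>
     neg ` Fd = Fd \<and> Fd \<inter> {tt, ff, uu} = {} \<and>
     (\<forall>(x, A) \<in> R. x \<in> Fd \<and> A \<noteq> {}) \<and>
     (\<forall>x \<in> Fd. \<exists>A. (x, A) \<in> R)"

definition selection_fun :: "('f \<times> 'f set) set \<Rightarrow> 'f \<Rightarrow> ('f set \<Rightarrow> 'f) \<Rightarrow> bool" where
  "selection_fun R x s \<longleftrightarrow> (\<forall>A. (x, A) \<in> R \<longrightarrow> s A \<in> A)"

definition sel_image :: "('f \<times> 'f set) set \<Rightarrow> 'f \<Rightarrow> ('f set \<Rightarrow> 'f) \<Rightarrow> 'f set" where
  "sel_image R x s = s ` {A. (x, A) \<in> R}"

definition Rstar :: "('f \<Rightarrow> 'f) \<Rightarrow> 'f set \<Rightarrow> ('f \<times> 'f set) set \<Rightarrow> ('f \<times> 'f set) set" where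
  "Rstar neg Fd R = {(neg x, neg ` sel_image R x s) | x s. x \<in> Fd \<and> selection_fun R x s}"

definition complementary :: "('f \<Rightarrow> 'f) \<Rightarrow> 'f set \<Rightarrow> ('f \<times> 'f set) set \<Rightarrow> bool" where
  "complementary neg Fd R \<longleftrightarrow> Rstar neg Fd R = R"

definition is_justification ::
  "'f set \<Rightarrow> ('f \<times> 'f set) set \<Rightarrow> 'n set \<Rightarrow> ('n \<times> 'n) set \<Rightarrow> ('n \<Rightarrow> 'f) \<Rightarrow> bool" where
  "is_justification Fd R N E lab \<longleftrightarrow>
     E \<subseteq> N \<times> N \<and>
     (\<forall>n \<in> N. (\<exists>m. (n, m) \<in> E) \<longrightarrow>
        lab n \<in> Fd \<and> (lab n, {lab m | m. (n, m) \<in> E}) \<in> R)"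

definition graph_like :: "'n set \<Rightarrow> ('n \<Rightarrow> 'f) \<Rightarrow> bool" where
  "graph_like N lab \<longleftrightarrow> inj_on lab N"

definition uadj :: "('n \<times> 'n) set \<Rightarrow> 'n \<Rightarrow> 'n \<Rightarrow> bool" where
  "uadj E n m \<longleftrightarrow> (n, m) \<in> E \<or> (m, n) \<in> E"

definition tree_like :: "'n set \<Rightarrow> ('n \<times> 'n) set \<Rightarrow> bool" where
  "tree_like N E \<longleftrightarrow>
     (\<forall>n. (n, n) \<notin> E) \<and>
     \<not> (\<exists>cs. length cs \<ge> 3 \<and> distinct cs \<and> set cs \<subseteq> N \<and>
            (\<forall>i < length cs. uadj E (cs ! i) (cs ! ((i + 1) mod length cs))))"

definition locally_complete :: "'f set \<Rightarrow> 'n set \<Rightarrow> ('n \<times> 'n) set \<Rightarrow> ('n \<Rightarrow> 'f) \<Rightarrow> bool" where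
  "locally_complete Fd N E lab \<longleftrightarrow> (\<forall>n \<in> N. (\<nexists>m. (n, m) \<in> E) \<longrightarrow> lab n \<notin> Fd)"

definition connected_just :: "'n set \<Rightarrow> ('n \<times> 'n) set \<Rightarrow> bool" where
  "connected_just N E \<longleftrightarrow> (\<forall>n \<in> N. \<forall>m \<in> N. (n, m) \<in> (E \<union> E\<inverse>)\<^sup>*)"

definition is_root :: "'n set \<Rightarrow> ('n \<times> 'n) set \<Rightarrow> ('n \<Rightarrow> 'f) \<Rightarrow> 'f \<Rightarrow> bool" where
  "is_root N E lab y \<longleftrightarrow> (\<exists>n \<in> N. lab n = y \<and> (\<forall>m \<in> N. (n, m) \<in> E\<^sup>*))"

datatype 'f gstate = FactS 'f | RuleS 'f "'f set"

fun is_fact :: "'f gstate \<Rightarrow> bool" where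
  "is_fact (FactS _) = True"
| "is_fact (RuleS _ _) = False"

fun fact_of :: "'f gstate \<Rightarrow> 'f" where
  "fact_of (FactS y) = y"
| "fact_of (RuleS x _) = x"

definition game_edges :: "('f \<times> 'f set) set \<Rightarrow> ('f gstate \<times> 'f gstate) set" where
  "game_edges R =
     {(FactS x, RuleS x A) | x A. (x, A) \<in> R} \<union>
     {(RuleS x A, FactS y) | x A y. (x, A) \<in> R \<and> y \<in> A}"

text \<open>States owned by F: rule symbols of rules in R (states owned by T: all FactS y).\<close>
definition S_F :: "('f \<times> 'f set) set \<Rightarrow> 'f gstate set" where
  "S_F R = {RuleS x A | x A. (x, A) \<in> R}"

definition is_path :: "('f \<times> 'f set) set \<Rightarrow> 'f gstate list \<Rightarrow> bool" where
  "is_path R p \<longleftrightarrow> p \<noteq> [] \<and> (\<forall>i. Suc i < length p \<longrightarrow> (p ! i, p ! Suc i) \<in> game_edges R)"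

definition general_strategy_F ::
  "('f \<times> 'f set) set \<Rightarrow> ('f gstate list \<Rightarrow> 'f gstate \<times> 'f gstate) \<Rightarrow> bool" where
  "general_strategy_F R \<rho> \<longleftrightarrow>
     (\<forall>p. is_path R p \<and> last p \<in> S_F R \<and> (\<exists>s. (last p, s) \<in> game_edges R) \<longrightarrow>
          \<rho> p \<in> game_edges R \<and> fst (\<rho> p) = last p)"

definition positional_strategy_F ::
  "('f \<times> 'f set) set \<Rightarrow> ('f gstate \<Rightarrow> 'f gstate \<times> 'f gstate) \<Rightarrow> bool" where
  "positional_strategy_F R \<tau> \<longleftrightarrow>
     (\<forall>s. s \<in> S_F R \<and> (\<exists>s'. (s, s') \<in> game_edges R) \<longrightarrow>
          \<tau> s \<in> game_edges R \<and> fst (\<tau> s) = s)"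

definition consistent ::
  "('f \<times> 'f set) set \<Rightarrow> ('f gstate list \<Rightarrow> 'f gstate \<times> 'f gstate) \<Rightarrow> 'f gstate list \<Rightarrow> bool" where
  "consistent R \<rho> p \<longleftrightarrow> is_path R p \<and>
     (\<forall>i. Suc i < length p \<longrightarrow> p ! i \<in> S_F R \<longrightarrow> \<rho> (take (Suc i) p) = (p ! i, p ! Suc i))"

definition pos_as_general :: "('f gstate \<Rightarrow> 'f gstate \<times> 'f gstate) \<Rightarrow> 'f gstate list \<Rightarrow> 'f gstate \<times> 'f gstate" where
  "pos_as_general \<tau> = (\<lambda>p. \<tau> (last p))"

definition play_tree_nodes :: "('f \<times> 'f set) set \<Rightarrow> ('f gstate list \<Rightarrow> 'f gstate \<times> 'f gstate) \<Rightarrow> 'f \<Rightarrow> 'f gstate list set" where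
  "play_tree_nodes R \<rho> x = {p. consistent R \<rho> p \<and> hd p = FactS x}"

definition play_tree_edges :: "('f \<times> 'f set) set \<Rightarrow> ('f gstate list \<Rightarrow> 'f gstate \<times> 'f gstate) \<Rightarrow> 'f \<Rightarrow> ('f gstate list \<times> 'f gstate list) set" where
  "play_tree_edges R \<rho> x = {(p, p @ [s]) | p s. p \<in> play_tree_nodes R \<rho> x \<and> p @ [s] \<in> play_tree_nodes R \<rho> x}"

definition play_graph_nodes :: "('f \<times> 'f set) set \<Rightarrow> ('f gstate \<Rightarrow> 'f gstate \<times> 'f gstate) \<Rightarrow> 'f \<Rightarrow> 'f gstate set" where
  "play_graph_nodes R \<tau> x = {s. \<exists>p. consistent R (pos_as_general \<tau>) p \<and> hd p = FactS x \<and> s \<in> set p}"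

definition play_graph_edges :: "('f \<times> 'f set) set \<Rightarrow> ('f gstate \<Rightarrow> 'f gstate \<times> 'f gstate) \<Rightarrow> 'f \<Rightarrow> ('f gstate \<times> 'f gstate) set" where
  "play_graph_edges R \<tau> x = {(s, s') | s s'. \<exists>p i. consistent R (pos_as_general \<tau>) p \<and> hd p = FactS x \<and>
      Suc i < length p \<and> p ! i = s \<and> p ! Suc i = s'}"

definition filt_nodes :: "'n set \<Rightarrow> ('n \<Rightarrow> 'f gstate) \<Rightarrow> 'n set" where
  "filt_nodes N lab = {n \<in> N. is_fact (lab n)}"

definition filt_edges :: "'n set \<Rightarrow> ('n \<times> 'n) set \<Rightarrow> ('n \<Rightarrow> 'f gstate) \<Rightarrow> ('n \<times> 'n) set" where
  "filt_edges N E lab = {(n, m) | n m. n \<in> filt_nodes N lab \<and> m \<in> filt_nodes N lab \<and>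
      (\<exists>k \<in> N. \<not> is_fact (lab k) \<and> (n, k) \<in> E \<and> (k, m) \<in> E)}"

definition J_label :: "('f \<Rightarrow> 'f) \<Rightarrow> ('n \<Rightarrow> 'f gstate) \<Rightarrow> 'n \<Rightarrow> 'f" where
  "J_label neg lab = (\<lambda>n. neg (fact_of (lab n)))"

definition J_pos_nodes where "J_pos_nodes R \<tau> x = filt_nodes (play_graph_nodes R \<tau> x) id"
definition J_pos_edges where "J_pos_edges R \<tau> x = filt_edges (play_graph_nodes R \<tau> x) (play_graph_edges R \<tau> x) id"
definition J_pos_label :: "('f \<Rightarrow> 'f) \<Rightarrow> 'f gstate \<Rightarrow> 'f" where "J_pos_label neg = J_label neg id"

definition J_gen_nodes where "J_gen_nodes R \<rho> x = filt_nodes (play_tree_nodes R \<rho> x) last"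
definition J_gen_edges where "J_gen_edges R \<rho> x = filt_edges (play_tree_nodes R \<rho> x) (play_tree_edges R \<rho> x) last"
definition J_gen_label :: "('f \<Rightarrow> 'f) \<Rightarrow> 'f gstate list \<Rightarrow> 'f" where "J_gen_label neg = J_label neg last"

end

theory Submission
  imports Defs
begin


lemma game_edges_iff:
  "(u, v) \<in> game_edges R \<longleftrightarrow>
    (\<exists>a A. u = FactS a \<and> v = RuleS a A \<and> (a, A) \<in> R) \<or>
    (\<exists>a A y. u = RuleS a A \<and> v = FactS y \<and> (a, A) \<in> R \<and> y \<in> A)"
  unfolding game_edges_def by auto

lemma FactS_notin_SF[simp]: "FactS a \<notin> S_F R"
  unfolding S_F_def by auto

lemma RuleS_in_SF[simp]: "RuleS a A \<in> S_F R \<longleftrightarrow> (a, A) \<in> R"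
  unfolding S_F_def by auto

lemma game_edge_flip: "(u, v) \<in> game_edges R \<Longrightarrow> is_fact v \<longleftrightarrow> \<not> is_fact u"
  unfolding game_edges_iff by auto

lemma cons_take:
  assumes "consistent R \<rho> p" "0 < k"
  shows "consistent R \<rho> (take k p)"
  using assms unfolding consistent_def is_path_def
  by (auto simp: take_take min_def)

lemma cons_snoc:
  assumes "consistent R \<rho> p" "(last p, s) \<in> game_edges R"
    "last p \<in> S_F R \<Longrightarrow> \<rho> p = (last p, s)"
  shows "consistent R \<rho> (p @ [s])"
  unfolding consistent_def is_path_def
proof (intro conjI allI impI)
  show "p @ [s] \<noteq> []" by simp
  have pne: "p \<noteq> []" using assms(1) unfolding consistent_def is_path_def by auto
  fix i assume i: "Suc i < length (p @ [s])"
  show "((p @ [s]) ! i, (p @ [s]) ! Suc i) \<in> game_edges R"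
  proof (cases "Suc i < length p")
    case True then show ?thesis using assms(1) unfolding consistent_def is_path_def
      by (auto simp: nth_append)
  next
    case False
    then have "i = length p - 1" using i by simp
    then show ?thesis using assms(2) pne by (auto simp: nth_append last_conv_nth)
  qed
  assume S: "(p @ [s]) ! i \<in> S_F R"
  show "\<rho> (take (Suc i) (p @ [s])) = ((p @ [s]) ! i, (p @ [s]) ! Suc i)"
  proof (cases "Suc i < length p")
    case True then show ?thesis using assms(1) S unfolding consistent_def
      by (auto simp: nth_append)
  next
    case False
    then have "i = length p - 1" using i by simp
    then show ?thesis using assms(3) S pne by (auto simp: nth_append last_conv_nth)
  qed
qed

lemma parity:
  assumes "is_path R p" "hd p = FactS x" "i < length p"
  shows "is_fact (p ! i) \<longleftrightarrow> even i"
  using assms(3)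
proof (induction i)
  case 0
  then show ?case using assms(1,2) unfolding is_path_def by (cases p) auto
next
  case (Suc i)
  then have "(p ! i, p ! Suc i) \<in> game_edges R" using assms(1) unfolding is_path_def by auto
  then show ?case using Suc by (auto dest: game_edge_flip)
qed

lemma L1:
  assumes gs: "general_strategy_F R \<rho>" and ne: "\<forall>(a, A) \<in> R. A \<noteq> {}"
    and c: "consistent R \<rho> p" and l: "last p = FactS a" and r: "(a, A) \<in> R"
  shows "\<exists>y. \<rho> (p @ [RuleS a A]) = (RuleS a A, FactS y) \<and> y \<in> A \<and>
     consistent R \<rho> (p @ [RuleS a A]) \<and> consistent R \<rho> (p @ [RuleS a A, FactS y])"
proof -
  let ?q = "p @ [RuleS a A]"
  have cq: "consistent R \<rho> ?q"
    using cons_snoc[OF c] l r by (auto simp: game_edges_iff)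
  have "A \<noteq> {}" using ne r by auto
  then obtain y0 where "y0 \<in> A" by auto
  then have "(last ?q, FactS y0) \<in> game_edges R" using r by (auto simp: game_edges_iff)
  moreover have "is_path R ?q" using cq unfolding consistent_def by auto
  moreover have "last ?q \<in> S_F R" using r by simp
  ultimately have "\<rho> ?q \<in> game_edges R \<and> fst (\<rho> ?q) = last ?q"
    using gs unfolding general_strategy_F_def by blast
  then obtain y where y: "\<rho> ?q = (RuleS a A, FactS y)" "y \<in> A"
    by (cases "\<rho> ?q") (auto simp: game_edges_iff)
  have "consistent R \<rho> (?q @ [FactS y])"
    using cons_snoc[OF cq] y r by (auto simp: game_edges_iff)
  then show ?thesis using y cq by auto
qed



lemma gen_node_iff: "n \<in> J_gen_nodes R \<rho> x \<longleftrightarrow> consistent R \<rho> n \<and> hd n = FactS x \<and> is_fact (last n)"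
  by (simp add: J_gen_nodes_def filt_nodes_def play_tree_nodes_def)

lemma cons_ne: "consistent R \<rho> p \<Longrightarrow> p \<noteq> []"
  unfolding consistent_def is_path_def by auto

lemma gen_edge_iff:
  assumes gs: "general_strategy_F R \<rho>" and ne: "\<forall>(a, A) \<in> R. A \<noteq> {}"
    and n: "n \<in> J_gen_nodes R \<rho> x" and l: "last n = FactS a"
  shows "(n, m) \<in> J_gen_edges R \<rho> x \<longleftrightarrow>
    (\<exists>A. (a, A) \<in> R \<and> m = n @ [RuleS a A, snd (\<rho> (n @ [RuleS a A]))])"
proof
  assume "(n, m) \<in> J_gen_edges R \<rho> x"
  then obtain r f where m: "m = n @ [r, f]" and cm: "consistent R \<rho> m"
    unfolding J_gen_edges_def filt_edges_def play_tree_edges_def play_tree_nodes_def filt_nodes_def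
    by auto
  have nne: "n \<noteq> []" using n cons_ne by (auto simp: gen_node_iff)
  have "Suc (length n - 1) < length m" using m nne by simp
  then have "(m ! (length n - 1), m ! Suc (length n - 1)) \<in> game_edges R"
    using cm unfolding consistent_def is_path_def by blast
  moreover have "m ! (length n - 1) = FactS a" using m l nne by (simp add: nth_append last_conv_nth)
  moreover have "m ! Suc (length n - 1) = r" using m nne by (simp add: nth_append)
  ultimately obtain A where r: "r = RuleS a A" and ra: "(a, A) \<in> R" by (auto simp: game_edges_iff)
  have "\<rho> (take (Suc (length n)) m) = (m ! length n, m ! Suc (length n))"
    using cm m r ra unfolding consistent_def by (auto simp: nth_append)
  then have "\<rho> (n @ [r]) = (r, f)" using m by (simp add: nth_append)
  then show "\<exists>A. (a, A) \<in> R \<and> m = n @ [RuleS a A, snd (\<rho> (n @ [RuleS a A]))]"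
    using m r ra by auto
next
  assume "\<exists>A. (a, A) \<in> R \<and> m = n @ [RuleS a A, snd (\<rho> (n @ [RuleS a A]))]"
  then obtain A where ra: "(a, A) \<in> R" and m: "m = n @ [RuleS a A, snd (\<rho> (n @ [RuleS a A]))]" by auto
  have cn: "consistent R \<rho> n" and h: "hd n = FactS x" using n by (auto simp: gen_node_iff)
  have nne: "n \<noteq> []" using cn cons_ne by auto
  obtain y where y: "\<rho> (n @ [RuleS a A]) = (RuleS a A, FactS y)"
    "consistent R \<rho> (n @ [RuleS a A])" "consistent R \<rho> (n @ [RuleS a A, FactS y])"
    using L1[OF gs ne cn l ra] by auto
  show "(n, m) \<in> J_gen_edges R \<rho> x"
    unfolding J_gen_edges_def filt_edges_def play_tree_edges_def play_tree_nodes_def filt_nodes_def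
    using y m n nne h
    by (simp add: gen_node_iff)
qed



lemma last_take_nth: "0 < k \<Longrightarrow> k \<le> length xs \<Longrightarrow> last (take k xs) = xs ! (k - 1)"
  by (subst last_conv_nth) (auto simp: min_def)

lemma gen_reach:
  assumes "n \<in> J_gen_nodes R \<rho> x"
  shows "([FactS x], n) \<in> (J_gen_edges R \<rho> x)\<^sup>*"
  using assms
proof (induction "length n" arbitrary: n rule: less_induct)
  case less
  have cn: "consistent R \<rho> n" and h: "hd n = FactS x" and lf: "is_fact (last n)"
    using less.prems by (auto simp: gen_node_iff)
  have nne: "n \<noteq> []" using cn cons_ne by auto
  have pn: "is_path R n" using cn unfolding consistent_def by auto
  define L where "L = length n"
  have L1': "L \<ge> 1" using nne L_def by (cases n) auto
  have "even (L - 1)" using parity[OF pn h, of "L - 1"] lf L1' nne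
    by (simp add: L_def last_conv_nth)
  show ?case
  proof (cases "L = 1")
    case True
    then have "n = [FactS x]" using h L_def by (cases n) auto
    then show ?thesis by simp
  next
    case False
    with \<open>even (L - 1)\<close> L1' have L3: "L \<ge> 3" by presburger
    define p where "p = take (L - 2) n"
    define k where "k = take (L - 1) n"
    have cp: "consistent R \<rho> p" unfolding p_def using cons_take[OF cn] L3 by simp
    have ck: "consistent R \<rho> k" unfolding k_def using cons_take[OF cn] L3 by simp
    have hp: "hd p = FactS x" unfolding p_def using h L3 by (simp add: hd_take)
    have hk: "hd k = FactS x" unfolding k_def using h L3 by (simp add: hd_take)
    have "last p = n ! (L - 3)" unfolding p_def using L3 L_def
      by (simp add: last_take_nth numeral_eq_Suc)
    moreover have e3: "even (L - 3)" using \<open>even (L - 1)\<close> L3 by presburger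
    moreover have "is_fact (n ! (L - 3))" using parity[OF pn h, of "L - 3"] e3 L3 L_def by simp
    ultimately have pN: "p \<in> J_gen_nodes R \<rho> x" using cp hp by (simp add: gen_node_iff)
    have "last k = n ! (L - 2)" unfolding k_def using L3 L_def
      by (simp add: last_take_nth numeral_eq_Suc)
    moreover have e2: "odd (L - 2)" using \<open>even (L - 1)\<close> L3 by presburger
    moreover have "\<not> is_fact (n ! (L - 2))" using parity[OF pn h, of "L - 2"] e2 L3 L_def by simp
    ultimately have nk: "\<not> is_fact (last k)" by simp
    have kp: "k = p @ [n ! (L - 2)]"
    proof -
      have a: "L - 1 = Suc (L - 2)" and b: "L - 2 < length n" using L3 L_def by auto
      have "take (Suc (L - 2)) n = take (L - 2) n @ [n ! (L - 2)]"
        by (rule take_Suc_conv_app_nth[OF b])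
      then show ?thesis using a by (simp add: k_def p_def)
    qed
    have nk2: "n = k @ [n ! (L - 1)]"
    proof -
      have "L = Suc (L - 1)" "L - 1 < length n" using L3 L_def by auto
      then show ?thesis using take_Suc_conv_app_nth[of "L - 1" n] L_def k_def by simp
    qed
    have "(p, n) \<in> J_gen_edges R \<rho> x"
      unfolding J_gen_edges_def filt_edges_def
    proof -
      have kT: "k \<in> play_tree_nodes R \<rho> x" using ck hk by (simp add: play_tree_nodes_def)
      have pT: "p \<in> play_tree_nodes R \<rho> x" "is_fact (last p)" using pN by (auto simp: gen_node_iff play_tree_nodes_def)
      have nT: "n \<in> play_tree_nodes R \<rho> x" "is_fact (last n)" using less.prems by (auto simp: gen_node_iff play_tree_nodes_def)
      have e1: "(p, k) \<in> play_tree_edges R \<rho> x" unfolding play_tree_edges_def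
        using kT pT by (intro CollectI exI[of _ p] exI[of _ "n ! (L - 2)"]) (simp add: kp)
      have e2: "(k, n) \<in> play_tree_edges R \<rho> x" unfolding play_tree_edges_def
        using kT nT by (intro CollectI exI[of _ k] exI[of _ "n ! (L - 1)"]) (use nk2 in auto)
      show "(p, n) \<in> {(n, m) |n m. n \<in> filt_nodes (play_tree_nodes R \<rho> x) last \<and> m \<in> filt_nodes (play_tree_nodes R \<rho> x) last \<and>
      (\<exists>k\<in>play_tree_nodes R \<rho> x. \<not> is_fact (last k) \<and> (n, k) \<in> play_tree_edges R \<rho> x \<and> (k, m) \<in> play_tree_edges R \<rho> x)}"
        using kT pT nT e1 e2 nk unfolding filt_nodes_def by blast
    qed
    moreover have "([FactS x], p) \<in> (J_gen_edges R \<rho> x)\<^sup>*"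
      using less.hyps[OF _ pN] L3 L_def p_def by simp
    ultimately show ?thesis by simp
  qed
qed



lemma conn_from_root:
  assumes "r \<in> N" "\<forall>n\<in>N. (r, n) \<in> E\<^sup>*"
  shows "connected_just N E"
  unfolding connected_just_def
proof (intro ballI)
  fix n m assume "n \<in> N" "m \<in> N"
  have a: "(r, n) \<in> (E \<union> E\<inverse>)\<^sup>*" using assms \<open>n \<in> N\<close> rtrancl_mono[of E "E \<union> E\<inverse>"] by blast
  have b: "(r, m) \<in> (E \<union> E\<inverse>)\<^sup>*" using assms \<open>m \<in> N\<close> rtrancl_mono[of E "E \<union> E\<inverse>"] by blast
  have "(n, r) \<in> ((E \<union> E\<inverse>)\<inverse>)\<^sup>*" using a by (simp add: rtrancl_converseI)
  moreover have "(E \<union> E\<inverse>)\<inverse> = E \<union> E\<inverse>" by auto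
  ultimately have "(n, r) \<in> (E \<union> E\<inverse>)\<^sup>*" by simp
  with b show "(n, m) \<in> (E \<union> E\<inverse>)\<^sup>*" by simp
qed

lemma single_cons: "consistent R \<rho> [FactS x]"
  unfolding consistent_def is_path_def by simp

lemma gen_root_node: "[FactS x] \<in> J_gen_nodes R \<rho> x"
  by (simp add: gen_node_iff single_cons)

lemma gen_edge_shape: "(p, q) \<in> J_gen_edges R \<rho> x \<Longrightarrow> \<exists>r f. q = p @ [r, f]"
  unfolding J_gen_edges_def filt_edges_def play_tree_edges_def by auto

lemma uadj_shape:
  assumes "uadj (J_gen_edges R \<rho> x) c d" "length d \<le> length c"
  shows "d = take (length c - 2) c"
  using assms unfolding uadj_def by (auto dest!: gen_edge_shape)

lemma mod_arith:
  assumes "(n::nat) \<ge> 3" "i < n" "(i + 1) mod n = (i + n - 1) mod n"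
  shows False
proof (cases "i + 1 < n")
  case True
  then have "(i + 1) mod n = i + 1" by simp
  moreover have "(i + n - 1) mod n = (if i = 0 then n - 1 else i - 1)"
  proof (cases "i = 0")
    case True then show ?thesis using assms by simp
  next
    case False
    then have e: "i + n - 1 = (i - 1) + n" by simp
    have "((i - 1) + n) mod n = i - 1" using assms by simp
    then show ?thesis using False e by simp
  qed
  ultimately show False using assms True by (auto split: if_splits)
next
  case False
  then have "i = n - 1" using assms by simp
  then have "(i + 1) mod n = 0" using assms by simp
  moreover have e: "i + n - 1 = (n - 2) + n" using \<open>i = n - 1\<close> assms by simp
  have "((n - 2) + n) mod n = n - 2"
  proof -
    have "\<And>m. m < n \<Longrightarrow> (m + n) mod n = m" by simp
    then show ?thesis using assms by (metis diff_less zero_less_numeral less_le_trans le_refl zero_less_numeral gr_zeroI not_numeral_le_zero)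
  qed
  then have "(i + n - 1) mod n = n - 2" using e by simp
  ultimately show False using assms by simp
qed

lemma gen_tree:
  "tree_like (J_gen_nodes R \<rho> x) (J_gen_edges R \<rho> x)"
  unfolding tree_like_def
proof (intro conjI allI notI)
  fix n assume "(n, n) \<in> J_gen_edges R \<rho> x"
  then show False by (auto dest: gen_edge_shape)
next
  let ?E = "J_gen_edges R \<rho> x"
  assume "\<exists>cs. 3 \<le> length cs \<and> distinct cs \<and> set cs \<subseteq> J_gen_nodes R \<rho> x \<and>
    (\<forall>i<length cs. uadj ?E (cs ! i) (cs ! ((i + 1) mod length cs)))"
  then obtain cs where l: "3 \<le> length cs" and d: "distinct cs"
    and adj: "\<forall>i<length cs. uadj ?E (cs ! i) (cs ! ((i + 1) mod length cs))" by blast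
  define n where "n = length cs"
  have "cs \<noteq> []" using l by auto
  then have "Max (length ` set cs) \<in> length ` set cs" by simp
  then obtain c where c: "c \<in> set cs" "length c = Max (length ` set cs)" by auto
  then obtain i where i: "i < n" "cs ! i = c" unfolding n_def by (auto simp: in_set_conv_nth)
  have mx: "\<And>j. j < n \<Longrightarrow> length (cs ! j) \<le> length (cs ! i)"
    using i c unfolding n_def by simp
  define j where "j = (i + 1) mod n"
  define h where "h = (i + n - 1) mod n"
  have n0: "0 < n" using l n_def by linarith
  have jn: "j < n" and hn: "h < n" using n0 unfolding j_def h_def by auto
  have hi: "(h + 1) mod n = i"
  proof -
    have "(h + 1) mod n = ((i + n - 1) + 1) mod n" unfolding h_def by (simp add: mod_Suc_eq)
    also have "(i + n - 1) + 1 = i + n" using l n_def by simp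
    finally show ?thesis using i by simp
  qed
  have u1: "uadj ?E (cs ! i) (cs ! j)" using adj i unfolding j_def n_def by auto
  have u2: "uadj ?E (cs ! h) (cs ! i)" using adj hn hi unfolding n_def by metis
  have u2': "uadj ?E (cs ! i) (cs ! h)" using u2 unfolding uadj_def by auto
  have "cs ! j = take (length (cs ! i) - 2) (cs ! i)" using uadj_shape[OF u1 mx[OF jn]] .
  moreover have "cs ! h = take (length (cs ! i) - 2) (cs ! i)" using uadj_shape[OF u2' mx[OF hn]] .
  ultimately have "cs ! j = cs ! h" by simp
  then have "j = h" using d jn hn unfolding n_def by (simp add: nth_eq_iff_index_eq)
  then show False using mod_arith[of n i] l i unfolding n_def j_def h_def by simp
qed



lemma negneg_Fd:
  assumes inv: "\<forall>y. neg (neg y) = y" and negFd: "neg ` Fd = Fd"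
  shows "neg a \<in> Fd \<longleftrightarrow> a \<in> Fd"
proof
  assume "neg a \<in> Fd"
  then have "neg (neg a) \<in> neg ` Fd" by blast
  then show "a \<in> Fd" using inv negFd by simp
next
  assume "a \<in> Fd" then show "neg a \<in> Fd" using negFd by blast
qed

lemma rstar_mem:
  assumes "a \<in> Fd" "selection_fun R a s"
  shows "(neg a, neg ` sel_image R a s) \<in> Rstar neg Fd R"
  using assms unfolding Rstar_def by blast

lemma gen_part:
  assumes gs: "general_strategy_F R \<rho>"
    and inv: "\<forall>y. neg (neg y) = y" and negFd: "neg ` Fd = Fd"
    and rl: "\<forall>(a, A) \<in> R. a \<in> Fd \<and> A \<noteq> {}"
    and df: "\<forall>a \<in> Fd. \<exists>A. (a, A) \<in> R"
    and comp: "Rstar neg Fd R = R"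
  shows "is_justification Fd R (J_gen_nodes R \<rho> x) (J_gen_edges R \<rho> x) (J_gen_label neg) \<and>
            connected_just (J_gen_nodes R \<rho> x) (J_gen_edges R \<rho> x) \<and>
            locally_complete Fd (J_gen_nodes R \<rho> x) (J_gen_edges R \<rho> x) (J_gen_label neg) \<and>
            tree_like (J_gen_nodes R \<rho> x) (J_gen_edges R \<rho> x) \<and>
            is_root (J_gen_nodes R \<rho> x) (J_gen_edges R \<rho> x) (J_gen_label neg) (neg x)"
proof -
  let ?N = "J_gen_nodes R \<rho> x" and ?E = "J_gen_edges R \<rho> x"
  have ne: "\<forall>(a, A) \<in> R. A \<noteq> {}" using rl by auto
  have fl: "\<And>n. n \<in> ?N \<Longrightarrow> \<exists>a. last n = FactS a"
    by (auto simp: gen_node_iff elim: is_fact.elims)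
  have J: "is_justification Fd R ?N ?E (J_gen_label neg)"
    unfolding is_justification_def
  proof (intro conjI ballI impI)
    show "?E \<subseteq> ?N \<times> ?N" unfolding J_gen_edges_def J_gen_nodes_def filt_edges_def by auto
  next
    fix n assume nN: "n \<in> ?N" and "\<exists>m. (n, m) \<in> ?E"
    then obtain m where nm: "(n, m) \<in> ?E" by blast
    obtain a where la: "last n = FactS a" using fl[OF nN] by blast
    note EI = gen_edge_iff[OF gs ne nN la]
    obtain A0 where "(a, A0) \<in> R" using nm EI by blast
    then have aFd: "a \<in> Fd" using rl by auto
    define s where "s = (\<lambda>A. fact_of (snd (\<rho> (n @ [RuleS a A]))))"
    have sel: "selection_fun R a s"
      unfolding selection_fun_def
    proof (intro allI impI)
      fix A assume "(a, A) \<in> R"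
      then obtain y where "\<rho> (n @ [RuleS a A]) = (RuleS a A, FactS y)" "y \<in> A"
        using L1[OF gs ne _ la] nN by (auto simp: gen_node_iff)
      then show "s A \<in> A" unfolding s_def by simp
    qed
    have eq: "{J_gen_label neg m |m. (n, m) \<in> ?E} = neg ` sel_image R a s"
      unfolding EI sel_image_def s_def J_gen_label_def J_label_def
      by (auto 0 4 intro!: exI[of _ "n @ [RuleS a _, snd (\<rho> (n @ [RuleS a _]))]"])
    have "J_gen_label neg n = neg a" by (simp add: J_gen_label_def J_label_def la)
    then show "J_gen_label neg n \<in> Fd" using aFd negFd by auto
    show "(J_gen_label neg n, {J_gen_label neg m |m. (n, m) \<in> ?E}) \<in> R"
      using rstar_mem[OF aFd sel, of neg] comp eq \<open>J_gen_label neg n = neg a\<close> by simp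
  qed
  have LC: "locally_complete Fd ?N ?E (J_gen_label neg)"
    unfolding locally_complete_def
  proof (intro ballI impI notI)
    fix n assume nN: "n \<in> ?N" and no: "\<nexists>m. (n, m) \<in> ?E" and inF: "J_gen_label neg n \<in> Fd"
    obtain a where la: "last n = FactS a" using fl[OF nN] by blast
    have "neg a \<in> Fd" using inF la by (simp add: J_gen_label_def J_label_def)
    then have "a \<in> Fd" using negneg_Fd[OF inv negFd] by simp
    then obtain A where "(a, A) \<in> R" using df by blast
    then show False using no gen_edge_iff[OF gs ne nN la] by blast
  qed
  have reach: "\<forall>n\<in>?N. ([FactS x], n) \<in> ?E\<^sup>*" by (intro ballI gen_reach)
  have RT: "is_root ?N ?E (J_gen_label neg) (neg x)"
    unfolding is_root_def using gen_root_node reach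
    by (intro bexI[of _ "[FactS x]"]) (auto simp: J_gen_label_def J_label_def)
  show ?thesis using J LC RT gen_tree[of R \<rho> x] conn_from_root[OF gen_root_node reach] by simp
qed



lemma pos_gen: "positional_strategy_F R \<tau> \<Longrightarrow> general_strategy_F R (pos_as_general \<tau>)"
  unfolding positional_strategy_F_def general_strategy_F_def pos_as_general_def by blast

lemma pos_node_iff:
  "s \<in> J_pos_nodes R \<tau> x \<longleftrightarrow> (\<exists>p \<in> J_gen_nodes R (pos_as_general \<tau>) x. last p = s)"
proof
  assume "s \<in> J_pos_nodes R \<tau> x"
  then obtain p where p: "consistent R (pos_as_general \<tau>) p" "hd p = FactS x" "s \<in> set p" "is_fact s"
    unfolding J_pos_nodes_def filt_nodes_def play_graph_nodes_def by auto
  then obtain i where i: "i < length p" "p ! i = s" by (auto simp: in_set_conv_nth)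
  have "consistent R (pos_as_general \<tau>) (take (Suc i) p)" using cons_take[OF p(1)] by simp
  moreover have "hd (take (Suc i) p) = FactS x" using p(2) by (simp add: hd_take)
  moreover have "last (take (Suc i) p) = s" using i by (simp add: last_take_nth)
  ultimately show "\<exists>p \<in> J_gen_nodes R (pos_as_general \<tau>) x. last p = s"
    using p(4) by (intro bexI[of _ "take (Suc i) p"]) (auto simp: gen_node_iff)
next
  assume "\<exists>p \<in> J_gen_nodes R (pos_as_general \<tau>) x. last p = s"
  then obtain p where p: "consistent R (pos_as_general \<tau>) p" "hd p = FactS x" "last p = s" "is_fact s"
    by (auto simp: gen_node_iff)
  have "s \<in> set p" using p(1,3) cons_ne by fastforce
  then show "s \<in> J_pos_nodes R \<tau> x"
    unfolding J_pos_nodes_def filt_nodes_def play_graph_nodes_def using p by auto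
qed

lemma pg_edge_game:
  "(s, t) \<in> play_graph_edges R \<tau> x \<Longrightarrow> (s, t) \<in> game_edges R"
  unfolding play_graph_edges_def consistent_def is_path_def by auto

lemma pg_edge_strat:
  assumes "(s, t) \<in> play_graph_edges R \<tau> x" "s \<in> S_F R"
  shows "\<tau> s = (s, t)"
proof -
  obtain p i where p: "consistent R (pos_as_general \<tau>) p" "Suc i < length p" "p ! i = s" "p ! Suc i = t"
    using assms(1) unfolding play_graph_edges_def by auto
  then have "pos_as_general \<tau> (take (Suc i) p) = (s, t)" using assms(2) unfolding consistent_def by auto
  moreover have "last (take (Suc i) p) = s" using p by (simp add: last_take_nth)
  ultimately show ?thesis unfolding pos_as_general_def by simp
qed

lemma pos_edge_iff:
  assumes ps: "positional_strategy_F R \<tau>" and ne: "\<forall>(a, A) \<in> R. A \<noteq> {}"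
    and aN: "FactS a \<in> J_pos_nodes R \<tau> x"
  shows "(FactS a, m) \<in> J_pos_edges R \<tau> x \<longleftrightarrow> (\<exists>A. (a, A) \<in> R \<and> m = snd (\<tau> (RuleS a A)))"
proof
  assume "(FactS a, m) \<in> J_pos_edges R \<tau> x"
  then obtain k where k1: "(FactS a, k) \<in> play_graph_edges R \<tau> x" and k2: "(k, m) \<in> play_graph_edges R \<tau> x"
    unfolding J_pos_edges_def filt_edges_def by auto
  from pg_edge_game[OF k1] obtain A where kA: "k = RuleS a A" "(a, A) \<in> R" by (auto simp: game_edges_iff)
  then have "\<tau> k = (k, m)" using pg_edge_strat[OF k2] by simp
  then show "\<exists>A. (a, A) \<in> R \<and> m = snd (\<tau> (RuleS a A))" using kA by auto
next
  assume "\<exists>A. (a, A) \<in> R \<and> m = snd (\<tau> (RuleS a A))"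
  then obtain A where ra: "(a, A) \<in> R" and m: "m = snd (\<tau> (RuleS a A))" by auto
  obtain p where pN: "p \<in> J_gen_nodes R (pos_as_general \<tau>) x" and lp: "last p = FactS a"
    using aN[unfolded pos_node_iff] by blast
  have cp: "consistent R (pos_as_general \<tau>) p" and hp: "hd p = FactS x" using pN by (auto simp: gen_node_iff)
  have pne: "p \<noteq> []" using cp cons_ne by auto
  obtain y where y: "pos_as_general \<tau> (p @ [RuleS a A]) = (RuleS a A, FactS y)"
    "consistent R (pos_as_general \<tau>) (p @ [RuleS a A, FactS y])"
    using L1[OF pos_gen[OF ps] ne cp lp ra] by auto
  have ty: "\<tau> (RuleS a A) = (RuleS a A, FactS y)" using y(1) by (simp add: pos_as_general_def)
  let ?q = "p @ [RuleS a A, FactS y]"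
  have hq: "hd ?q = FactS x" using hp pne by simp
  have q1: "?q ! (length p - 1) = FactS a" using lp pne by (simp add: nth_append last_conv_nth)
  have q2: "?q ! Suc (length p - 1) = RuleS a A" using pne by (simp add: nth_append)
  have q3: "?q ! Suc (length p) = FactS y" by (simp add: nth_append)
  have q2': "?q ! length p = RuleS a A" by (simp add: nth_append)
  have e1: "(FactS a, RuleS a A) \<in> play_graph_edges R \<tau> x"
    unfolding play_graph_edges_def using y(2) hq q1 q2 pne
    by (intro CollectI exI[of _ "FactS a"] exI[of _ "RuleS a A"] conjI refl exI[of _ ?q] exI[of _ "length p - 1"]) auto
  have e2: "(RuleS a A, FactS y) \<in> play_graph_edges R \<tau> x"
    unfolding play_graph_edges_def using y(2) hq q2' q3
    by (intro CollectI exI[of _ "RuleS a A"] exI[of _ "FactS y"] conjI refl exI[of _ ?q] exI[of _ "length p"]) auto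
  have kN: "RuleS a A \<in> play_graph_nodes R \<tau> x"
    unfolding play_graph_nodes_def using y(2) hq by auto
  have "FactS a \<in> set ?q" using lp pne last_in_set[of p] by auto
  then have aN': "FactS a \<in> play_graph_nodes R \<tau> x" and yN: "FactS y \<in> play_graph_nodes R \<tau> x"
    unfolding play_graph_nodes_def using y(2) hq by auto
  show "(FactS a, m) \<in> J_pos_edges R \<tau> x"
    unfolding J_pos_edges_def filt_edges_def filt_nodes_def m ty
    using e1 e2 kN aN' yN by (auto intro!: bexI[of _ "RuleS a A"])
qed



lemma gen_edge_nodes: "(p, q) \<in> J_gen_edges R \<rho> x \<Longrightarrow> p \<in> J_gen_nodes R \<rho> x \<and> q \<in> J_gen_nodes R \<rho> x"
  unfolding J_gen_edges_def J_gen_nodes_def filt_edges_def by auto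

lemma pos_part:
  assumes ps: "positional_strategy_F R \<tau>"
    and inv: "\<forall>y. neg (neg y) = y" and negFd: "neg ` Fd = Fd"
    and rl: "\<forall>(a, A) \<in> R. a \<in> Fd \<and> A \<noteq> {}"
    and df: "\<forall>a \<in> Fd. \<exists>A. (a, A) \<in> R"
    and comp: "Rstar neg Fd R = R"
  shows "is_justification Fd R (J_pos_nodes R \<tau> x) (J_pos_edges R \<tau> x) (J_pos_label neg) \<and>
            connected_just (J_pos_nodes R \<tau> x) (J_pos_edges R \<tau> x) \<and>
            locally_complete Fd (J_pos_nodes R \<tau> x) (J_pos_edges R \<tau> x) (J_pos_label neg) \<and>
            graph_like (J_pos_nodes R \<tau> x) (J_pos_label neg) \<and>
            is_root (J_pos_nodes R \<tau> x) (J_pos_edges R \<tau> x) (J_pos_label neg) (neg x)"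
proof -
  let ?N = "J_pos_nodes R \<tau> x" and ?E = "J_pos_edges R \<tau> x" and ?\<sigma> = "pos_as_general \<tau>"
  have ne: "\<forall>(a, A) \<in> R. A \<noteq> {}" using rl by auto
  have gs: "general_strategy_F R ?\<sigma>" using pos_gen[OF ps] .
  have fl: "\<And>n. n \<in> ?N \<Longrightarrow> \<exists>a. n = FactS a"
  proof -
    fix n assume "n \<in> ?N"
    then obtain p where "p \<in> J_gen_nodes R ?\<sigma> x" "last p = n" unfolding pos_node_iff by blast
    then have "is_fact n" by (auto simp: gen_node_iff)
    then show "\<exists>a. n = FactS a" by (cases n) auto
  qed
  have lab: "\<And>a. J_pos_label neg (FactS a) = neg a" by (simp add: J_pos_label_def J_label_def)
  have tsel: "\<And>a A. (a, A) \<in> R \<Longrightarrow> \<exists>y. \<tau> (RuleS a A) = (RuleS a A, FactS y) \<and> y \<in> A"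
  proof -
    fix a A assume ra: "(a, A) \<in> R"
    then obtain y0 where "y0 \<in> A" using ne by fastforce
    then have "(RuleS a A, FactS y0) \<in> game_edges R" using ra by (auto simp: game_edges_iff)
    then have "\<tau> (RuleS a A) \<in> game_edges R \<and> fst (\<tau> (RuleS a A)) = RuleS a A"
      using ps ra RuleS_in_SF[of a A R] unfolding positional_strategy_F_def by blast
    then show "\<exists>y. \<tau> (RuleS a A) = (RuleS a A, FactS y) \<and> y \<in> A"
      by (cases "\<tau> (RuleS a A)") (auto simp: game_edges_iff)
  qed
  have J: "is_justification Fd R ?N ?E (J_pos_label neg)"
    unfolding is_justification_def
  proof (intro conjI ballI impI)
    show "?E \<subseteq> ?N \<times> ?N" unfolding J_pos_edges_def J_pos_nodes_def filt_edges_def by auto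
  next
    fix n assume nN: "n \<in> ?N" and "\<exists>m. (n, m) \<in> ?E"
    then obtain m where nm: "(n, m) \<in> ?E" by blast
    obtain a where na: "n = FactS a" using fl[OF nN] by blast
    note EI = pos_edge_iff[OF ps ne nN[unfolded na]]
    obtain A0 where "(a, A0) \<in> R" using nm EI na by blast
    then have aFd: "a \<in> Fd" using rl by auto
    define s where "s = (\<lambda>A. fact_of (snd (\<tau> (RuleS a A))))"
    have sel: "selection_fun R a s"
      unfolding selection_fun_def
    proof (intro allI impI)
      fix A assume "(a, A) \<in> R"
      then obtain y where "\<tau> (RuleS a A) = (RuleS a A, FactS y)" "y \<in> A" using tsel by blast
      then show "s A \<in> A" unfolding s_def by simp
    qed
    have eq: "{J_pos_label neg m |m. (n, m) \<in> ?E} = neg ` sel_image R a s"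
      unfolding na EI sel_image_def s_def J_pos_label_def J_label_def by auto
    show "J_pos_label neg n \<in> Fd" using aFd negFd na lab by auto
    show "(J_pos_label neg n, {J_pos_label neg m |m. (n, m) \<in> ?E}) \<in> R"
      using rstar_mem[OF aFd sel, of neg] comp eq na lab by simp
  qed
  have LC: "locally_complete Fd ?N ?E (J_pos_label neg)"
    unfolding locally_complete_def
  proof (intro ballI impI notI)
    fix n assume nN: "n \<in> ?N" and no: "\<nexists>m. (n, m) \<in> ?E" and inF: "J_pos_label neg n \<in> Fd"
    obtain a where na: "n = FactS a" using fl[OF nN] by blast
    have "neg a \<in> Fd" using inF na lab by simp
    then have "a \<in> Fd" using negneg_Fd[OF inv negFd] by simp
    then obtain A where "(a, A) \<in> R" using df by blast
    then show False using no pos_edge_iff[OF ps ne nN[unfolded na]] na by blast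
  qed
  have GL: "graph_like ?N (J_pos_label neg)"
    unfolding graph_like_def inj_on_def
  proof (intro ballI impI)
    fix n m assume "n \<in> ?N" "m \<in> ?N" and e: "J_pos_label neg n = J_pos_label neg m"
    then obtain a b where "n = FactS a" "m = FactS b" using fl by blast
    moreover have "neg (neg a) = neg (neg b)" using e calculation lab by simp
    ultimately show "n = m" using inv by simp
  qed
  have stp: "\<And>p q. (p, q) \<in> J_gen_edges R ?\<sigma> x \<Longrightarrow> (last p, last q) \<in> ?E"
  proof -
    fix p q assume pq: "(p, q) \<in> J_gen_edges R ?\<sigma> x"
    have pN: "p \<in> J_gen_nodes R ?\<sigma> x" using gen_edge_nodes[OF pq] by simp
    then have "is_fact (last p)" by (auto simp: gen_node_iff)
    then obtain a where la: "last p = FactS a" by (cases "last p") auto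
    obtain A where ra: "(a, A) \<in> R" and q: "q = p @ [RuleS a A, snd (?\<sigma> (p @ [RuleS a A]))]"
      using pq gen_edge_iff[OF gs ne pN la] by blast
    have lq: "last q = snd (\<tau> (RuleS a A))" using q by (simp add: pos_as_general_def)
    have aN: "FactS a \<in> ?N" unfolding pos_node_iff using pN la by blast
    show "(last p, last q) \<in> ?E" using pos_edge_iff[OF ps ne aN] ra la lq by auto
  qed
  have mapr: "\<And>u v. (u, v) \<in> (J_gen_edges R ?\<sigma> x)\<^sup>* \<Longrightarrow> (last u, last v) \<in> ?E\<^sup>*"
  proof -
    fix u v assume "(u, v) \<in> (J_gen_edges R ?\<sigma> x)\<^sup>*"
    then show "(last u, last v) \<in> ?E\<^sup>*"
    proof (induction rule: rtrancl_induct)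
      case base then show ?case by simp
    next
      case (step y z)
      have "(last y, last z) \<in> ?E" by (rule stp[OF step(2)])
      then show ?case using step(3) by simp
    qed
  qed
  have xN: "FactS x \<in> ?N" unfolding pos_node_iff using gen_root_node[of x R ?\<sigma>] by force
  have reach: "\<forall>n\<in>?N. (FactS x, n) \<in> ?E\<^sup>*"
  proof
    fix n assume "n \<in> ?N"
    then obtain p where "p \<in> J_gen_nodes R ?\<sigma> x" "last p = n" unfolding pos_node_iff by blast
    then show "(FactS x, n) \<in> ?E\<^sup>*" using mapr[OF gen_reach[of p R ?\<sigma> x]] by simp
  qed
  have RT: "is_root ?N ?E (J_pos_label neg) (neg x)"
    unfolding is_root_def using xN reach lab by blast
  show ?thesis using J LC GL RT conn_from_root[OF xN reach] by simp
qed

theorem mainTheorem7: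
  fixes neg :: "'f \<Rightarrow> 'f" and tt ff uu :: 'f and Fd :: "'f set"
    and R :: "('f \<times> 'f set) set" and x :: 'f
  assumes "justification_frame neg tt ff uu Fd R"
    and "complementary neg Fd R"
    and "x \<in> Fd"
  shows "(\<forall>\<tau>. positional_strategy_F R \<tau> \<longrightarrow>
            is_justification Fd R (J_pos_nodes R \<tau> x) (J_pos_edges R \<tau> x) (J_pos_label neg) \<and>
            connected_just (J_pos_nodes R \<tau> x) (J_pos_edges R \<tau> x) \<and>
            locally_complete Fd (J_pos_nodes R \<tau> x) (J_pos_edges R \<tau> x) (J_pos_label neg) \<and>
            graph_like (J_pos_nodes R \<tau> x) (J_pos_label neg) \<and>
            is_root (J_pos_nodes R \<tau> x) (J_pos_edges R \<tau> x) (J_pos_label neg) (neg x))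
       \<and> (\<forall>\<rho>. general_strategy_F R \<rho> \<longrightarrow>
            is_justification Fd R (J_gen_nodes R \<rho> x) (J_gen_edges R \<rho> x) (J_gen_label neg) \<and>
            connected_just (J_gen_nodes R \<rho> x) (J_gen_edges R \<rho> x) \<and>
            locally_complete Fd (J_gen_nodes R \<rho> x) (J_gen_edges R \<rho> x) (J_gen_label neg) \<and>
            tree_like (J_gen_nodes R \<rho> x) (J_gen_edges R \<rho> x) \<and>
            is_root (J_gen_nodes R \<rho> x) (J_gen_edges R \<rho> x) (J_gen_label neg) (neg x))"
  proof -
  have fr: "fact_space_ok neg tt ff uu" "neg ` Fd = Fd" "\<forall>(a, A) \<in> R. a \<in> Fd \<and> A \<noteq> {}"
    "\<forall>a \<in> Fd. \<exists>A. (a, A) \<in> R"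
    using assms(1) unfolding justification_frame_def by auto
  have inv: "\<forall>y. neg (neg y) = y" using fr(1) unfolding fact_space_ok_def by auto
  have comp: "Rstar neg Fd R = R" using assms(2) unfolding complementary_def .
  show ?thesis
    using pos_part[OF _ inv fr(2) fr(3) fr(4) comp] gen_part[OF _ inv fr(2) fr(3) fr(4) comp]
    by blast
qed

end
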